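(* Fix $0<\epsilon<1$ and $z,w\in\mathcal{S}^{n-1}$. If $\tilde z,\tilde w\in\mathcal{S}^{n-1}$ satisfy $\|\tilde z-z\|\leqslant\epsilon$ and $\|\tilde w-w\|\leqslant\epsilon$, then $\|\Phi_{\tilde z,\tilde w}-\Phi_{z,w}\|\leqslant\frac{88}{\pi}\epsilon$.
   Context: $\mathcal{S}^{n-1}$ is the unit sphere in $\mathbb{R}^n$; $\|\cdot\|$ is the spectral norm for matrices. For nonzero $z,w$: $\theta_{z,w}=\angle(z,w)\in[0,\pi]$, $\hat z=z/\|z\|$, $M_{\hat z\leftrightarrow\hat w}$ the symmetric matrix sending $\hat z\mapsto\hat w$, $\hat w\mapsto\hat z$ and vanishing on $\mathrm{span}(z,w)^\perp$ ($\pm\hat z\hat z^\top$ when $\theta_{z,w}\in\{0,\pi\}$), and $\Phi_{z,w}=\frac{\pi-2\theta_{z,w}}{\pi}I_n+\frac{2\sin\theta_{z,w}}{\pi}M_{\hat z\leftrightarrow\hat w}$. *)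

theory Defs
  imports "HOL-Analysis.Analysis"
begin

definition vec_angle :: "real^'n \<Rightarrow> real^'n \<Rightarrow> real" where
  "vec_angle z w = arccos ((z \<bullet> w) / (norm z * norm w))"

text \<open>When the angle is 0 or pi this property
  uniquely determines the matrix as plus/minus (sgn z)(sgn z)^T.\<close>
definition swap_mat :: "real^'n \<Rightarrow> real^'n \<Rightarrow> real^'n^'n" where
  "swap_mat z w = (THE M. transpose M = M \<and> M *v sgn z = sgn w \<and> M *v sgn w = sgn z \<and>
      (\<forall>x. x \<bullet> z = 0 \<and> x \<bullet> w = 0 \<longrightarrow> M *v x = 0))"

definition Phi :: "real^'n \<Rightarrow> real^'n \<Rightarrow> real^'n^'n" where
  "Phi z w = ((pi - 2 * vec_angle z w) / pi) *\<^sub>R mat 1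
            + (2 * sin (vec_angle z w) / pi) *\<^sub>R swap_mat z w"

definition spec_norm :: "real^'n^'m \<Rightarrow> real" where
  "spec_norm A = onorm (\<lambda>x. A *v x)"

end

theory Submission
  imports Defs
begin

definition outer :: "real^'n \<Rightarrow> real^'n^'n" where
  "outer v = (\<chi> i j. v$i * v$j)"

lemma outer_mv: "outer v *v x = (v \<bullet> x) *\<^sub>R v"
  by (simp add: outer_def vec_eq_iff matrix_vector_mult_def inner_vec_def sum_distrib_left mult_ac)

lemma outer_transpose: "transpose (outer v) = outer v"
  by (simp add: outer_def transpose_def vec_eq_iff mult.commute)

lemma swap_mat_eq:
  fixes z w :: "real^'n"
  assumes z: "norm z = 1" and w: "norm w = 1" and a: "z + w \<noteq> 0" and b: "z - w \<noteq> 0"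
  shows "swap_mat z w *v x = ((z+w) \<bullet> x / (norm (z+w))^2) *\<^sub>R (z+w) - ((z-w) \<bullet> x / (norm (z-w))^2) *\<^sub>R (z-w)"
proof -
  define a where "a = z + w"
  define b where "b = z - w"
  have sz: "sgn z = z" using z by (simp add: sgn_div_norm)
  have sw: "sgn w = w" using w by (simp add: sgn_div_norm)
  have zz: "z \<bullet> z = 1" using z by (simp add: dot_square_norm)
  have ww: "w \<bullet> w = 1" using w by (simp add: dot_square_norm)
  have na: "(norm a)^2 = 2 + 2 * (z \<bullet> w)"
    unfolding a_def power2_norm_eq_inner by (simp add: inner_add zz ww inner_commute)
  have nb: "(norm b)^2 = 2 - 2 * (z \<bullet> w)"
    unfolding b_def power2_norm_eq_inner by (simp add: inner_diff zz ww inner_commute)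
  have na0: "(norm a)^2 \<noteq> 0" using a a_def by simp
  have nb0: "(norm b)^2 \<noteq> 0" using b b_def by simp
  define f where "f x = (a \<bullet> x / (norm a)^2) *\<^sub>R a - (b \<bullet> x / (norm b)^2) *\<^sub>R b" for x
  define N where "N = (1 / (norm a)^2) *\<^sub>R outer a - (1 / (norm b)^2) *\<^sub>R outer b"
  have Nf: "N *v x = f x" for x
    by (simp add: N_def f_def matrix_vector_mult_diff_rdistrib scaleR_matrix_vector_assoc[symmetric] outer_mv)
  have az: "a \<bullet> z = 1 + z \<bullet> w" unfolding a_def by (simp add: inner_add zz inner_commute)
  have aw: "a \<bullet> w = 1 + z \<bullet> w" unfolding a_def by (simp add: inner_add ww inner_commute)
  have bz: "b \<bullet> z = 1 - z \<bullet> w" unfolding b_def by (simp add: inner_diff zz inner_commute)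
  have bw: "b \<bullet> w = z \<bullet> w - 1" unfolding b_def by (simp add: inner_diff ww inner_commute)
  have h1: "(1 + w \<bullet> z) / (2 + 2 * (w \<bullet> z)) = 1/2" using na0 na by (simp add: inner_commute divide_simps)
  have h2: "(1 - w \<bullet> z) / (2 - 2 * (w \<bullet> z)) = 1/2" using nb0 nb by (simp add: inner_commute divide_simps)
  have h3: "(w \<bullet> z - 1) / (2 - 2 * (w \<bullet> z)) = -1/2" using nb0 nb by (simp add: inner_commute divide_simps)
  have fz: "f z = w"
  proof -
    have "f z = (1/2) *\<^sub>R a - (1/2) *\<^sub>R b"
      unfolding f_def using na0 nb0 by (simp add: az bz na nb inner_commute[of z] h1 h2)
    then show ?thesis by (simp add: a_def b_def vec_eq_iff field_simps)
  qed
  have fw: "f w = z"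
  proof -
    have "f w = (1/2) *\<^sub>R a + (1/2) *\<^sub>R b"
      using na0 nb0 unfolding f_def 
      by (simp add: aw bw na nb inner_commute[of z] h1 h3)
    then show ?thesis by (simp add: a_def b_def vec_eq_iff field_simps)
  qed
  let ?P = "\<lambda>M. transpose M = M \<and> M *v sgn z = sgn w \<and> M *v sgn w = sgn z \<and>
      (\<forall>x. x \<bullet> z = 0 \<and> x \<bullet> w = 0 \<longrightarrow> M *v x = 0)"
  have PN: "?P N"
  proof (intro conjI allI impI)
    show "transpose N = N" by (simp add: N_def transpose_scalar outer_transpose transpose_def[symmetric]
        vec_eq_iff) (simp add: transpose_def outer_def mult.commute)
    show "N *v sgn z = sgn w" using Nf fz sz sw by simp
    show "N *v sgn w = sgn z" using Nf fw sz sw by simp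
    fix x assume "x \<bullet> z = 0 \<and> x \<bullet> w = 0"
    then have "a \<bullet> x = 0" "b \<bullet> x = 0" by (auto simp: a_def b_def inner_add inner_diff inner_commute)
    then show "N *v x = 0" by (simp add: Nf f_def)
  qed
  have uniq: "M *v x = f x" if PM: "?P M" for M x
  proof -
    define p where "p = (a \<bullet> x / (norm a)^2) *\<^sub>R a + (b \<bullet> x / (norm b)^2) *\<^sub>R b"
    define r where "r = x - p"
    have k1: "a \<bullet> z / (norm a)^2 = 1/2" "a \<bullet> w / (norm a)^2 = 1/2"
      using h1 by (simp_all add: az aw na inner_commute)
    have k2: "b \<bullet> z / (norm b)^2 = 1/2" "b \<bullet> w / (norm b)^2 = -1/2"
      using h2 h3 by (simp_all add: bz bw nb inner_commute)
    have fzz: "p \<bullet> z = (a \<bullet> x) * (a \<bullet> z / (norm a)^2) + (b \<bullet> x) * (b \<bullet> z / (norm b)^2)"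
      unfolding p_def by (simp add: inner_add_left)
    have fww: "p \<bullet> w = (a \<bullet> x) * (a \<bullet> w / (norm a)^2) + (b \<bullet> x) * (b \<bullet> w / (norm b)^2)"
      unfolding p_def by (simp add: inner_add_left)
    have "r \<bullet> z = 0"
      unfolding r_def inner_diff_left fzz k1 k2
      by (simp add: a_def b_def inner_add_left inner_diff_left inner_commute[of x] field_simps)
    moreover have "r \<bullet> w = 0"
      unfolding r_def inner_diff_left fww k1 k2
      by (simp add: a_def b_def inner_add_left inner_diff_left inner_commute[of x] field_simps)
    ultimately have Mr: "M *v r = 0" using PM by blast
    have Mz: "M *v z = w" and Mw: "M *v w = z" using PM sz sw by auto
    have Ma: "M *v a = a" unfolding a_def matrix_vector_right_distrib Mz Mw by (rule add.commute)
    have Mb: "M *v b = - b" unfolding b_def matrix_vector_mult_diff_distrib Mz Mw by simp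
    have "M *v x = M *v (p + r)" by (simp add: r_def)
    also have "\<dots> = M *v p + M *v r" by (rule matrix_vector_right_distrib)
    also have "\<dots> = f x"
      by (simp add: Mr p_def f_def matrix_vector_right_distrib matrix_vector_mult_scaleR Ma Mb)
    finally show ?thesis .
  qed
  have "swap_mat z w = N"
    unfolding swap_mat_def
  proof (rule the_equality)
    show "?P N" by (rule PN)
    fix M assume "?P M"
    show "M = N" by (rule matrix_eq[THEN iffD2]) (simp add: Nf uniq[OF \<open>?P M\<close>])
  qed
  then show ?thesis using Nf f_def a_def b_def by simp
qed


lemma sin_ge_half:
  fixes t :: real assumes "0 \<le> t" "t \<le> pi/3"
  shows "t/2 \<le> sin t"
proof -
  let ?f = "\<lambda>t. sin t - t/2"
  have "?f 0 \<le> ?f t"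
  proof (rule DERIV_nonneg_imp_nondecreasing[OF assms(1)])
    fix u assume u: "0 \<le> u" "u \<le> t"
    have "(?f has_real_derivative cos u - 1/2) (at u)"
      by (auto intro!: derivative_eq_intros)
    moreover have "cos (pi/3) \<le> cos u"
      using u assms by (intro cos_monotone_0_pi_le) auto
    ultimately show "\<exists>y. (?f has_real_derivative y) (at u) \<and> 0 \<le> y"
      using cos_60 by auto
  qed
  then show ?thesis by simp
qed

lemma sq_le_abs_sum: "(a::real)^2 + b^2 \<le> (\<bar>a\<bar> + \<bar>b\<bar>)^2"
proof -
  have "(\<bar>a\<bar> + \<bar>b\<bar>)^2 = \<bar>a\<bar>^2 + \<bar>b\<bar>^2 + 2 * \<bar>a\<bar> * \<bar>b\<bar>" by (rule power2_sum)
  then show ?thesis by simp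
qed

lemma angle_chord:
  fixes p q :: real
  assumes "0 \<le> p" "p \<le> pi/2" "0 \<le> q" "q \<le> pi/2"
  shows "\<bar>p - q\<bar> \<le> 2 * (\<bar>cos p - cos q\<bar> + \<bar>sin p - sin q\<bar>)"
proof -
  define d where "d = p - q"
  have chord: "(cos p - cos q)^2 + (sin p - sin q)^2 = 4 * (sin (d/2))^2"
  proof -
    have "(cos p - cos q)^2 + (sin p - sin q)^2 = 2 - 2 * cos d"
      unfolding d_def cos_diff
      by (simp add: power2_eq_square algebra_simps)
    also have "cos d = 1 - 2 * (sin (d/2))^2"
      using cos_double_sin[of "d/2"] by simp
    finally show ?thesis by simp
  qed
  have t: "0 \<le> \<bar>d\<bar>/2" "\<bar>d\<bar>/2 \<le> pi/3" using assms d_def pi_gt_zero by (auto simp: abs_if)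
  have "\<bar>d\<bar>/4 \<le> sin (\<bar>d\<bar>/2)" using sin_ge_half[OF t] by simp
  also have "sin (\<bar>d\<bar>/2) = \<bar>sin (d/2)\<bar>"
  proof (cases "d \<ge> 0")
    case True
    then have "0 \<le> sin (d/2)" using t by (intro sin_ge_zero) auto
    then show ?thesis using True by simp
  next
    case False
    then have "0 \<le> sin (-d/2)" using t by (intro sin_ge_zero) auto
    then show ?thesis using False by simp
  qed
  finally have h: "\<bar>d\<bar>/4 \<le> \<bar>sin (d/2)\<bar>" .
  have "(\<bar>d\<bar>/2)^2 \<le> (2 * \<bar>sin (d/2)\<bar>)^2"
    using h by (intro power_mono) auto
  also have "\<dots> = (cos p - cos q)^2 + (sin p - sin q)^2"
    using chord by (simp add: power_mult_distrib)
  also have "\<dots> \<le> (\<bar>cos p - cos q\<bar> + \<bar>sin p - sin q\<bar>)^2"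
    by (rule sq_le_abs_sum)
  finally have "\<bar>d\<bar>/2 \<le> \<bar>cos p - cos q\<bar> + \<bar>sin p - sin q\<bar>"
    by (rule power2_le_imp_le) simp
  then show ?thesis unfolding d_def by simp
qed

definition FF :: "real^'n \<Rightarrow> real^'n \<Rightarrow> real^'n" where
  "FF v x = (v \<bullet> x / norm v) *\<^sub>R v"

lemma FF_bound: "norm (FF v x) \<le> norm v * norm x"
proof (cases "v = 0")
  case True then show ?thesis by (simp add: FF_def)
next
  case False
  have "norm (FF v x) = \<bar>v \<bullet> x\<bar>" using False by (simp add: FF_def)
  also have "\<dots> \<le> norm v * norm x" by (rule Cauchy_Schwarz_ineq2)
  finally show ?thesis .
qed

lemma FF_lip: "norm (FF v' x - FF v x) \<le> 5 * norm (v' - v) * norm x"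
proof (cases "v = 0 \<or> v' = 0")
  case True
  then show ?thesis
  proof
    assume "v = 0"
    then have e: "FF v' x - FF v x = FF v' x" "v' - v = v'" by (simp_all add: FF_def)
    have "norm v' * norm x \<le> 5 * norm v' * norm x"
      using mult_nonneg_nonneg[OF norm_ge_zero norm_ge_zero, of v' x] by linarith
    then show ?thesis unfolding e using FF_bound[of v' x] by linarith
  next
    assume "v' = 0"
    then have e: "FF v' x - FF v x = - FF v x" "norm (v' - v) = norm v" by (simp_all add: FF_def)
    have "norm v * norm x \<le> 5 * norm v * norm x"
      using mult_nonneg_nonneg[OF norm_ge_zero norm_ge_zero, of v x] by linarith
    then show ?thesis unfolding e norm_minus_cancel using FF_bound[of v x] by linarith
  qed
next
  case False
  then have v: "v \<noteq> 0" and v': "v' \<noteq> 0" by auto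
  define u where "u = (1 / norm v) *\<^sub>R v"
  define u' where "u' = (1 / norm v') *\<^sub>R v'"
  have nu: "norm u = 1" "norm u' = 1" using v v' by (auto simp: u_def u'_def)
  have Fv: "FF v x = norm v *\<^sub>R ((u \<bullet> x) *\<^sub>R u)" using v
    by (simp add: FF_def u_def)
  have Fv': "FF v' x = norm v' *\<^sub>R ((u' \<bullet> x) *\<^sub>R u')" using v'
    by (simp add: FF_def u'_def)
  have dec: "FF v' x - FF v x = (norm v' - norm v) *\<^sub>R ((u' \<bullet> x) *\<^sub>R u')
      + norm v *\<^sub>R (((u' - u) \<bullet> x) *\<^sub>R u' + (u \<bullet> x) *\<^sub>R (u' - u))"
  proof -
    have i: "((u' - u) \<bullet> x) *\<^sub>R u' + (u \<bullet> x) *\<^sub>R (u' - u) = (u' \<bullet> x) *\<^sub>R u' - (u \<bullet> x) *\<^sub>R u"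
      by (simp add: inner_diff_left scaleR_diff_left scaleR_diff_right)
    have j: "(norm v' * (u' \<bullet> x)) *\<^sub>R u' = ((norm v' - norm v) * (u' \<bullet> x)) *\<^sub>R u' + (norm v * (u' \<bullet> x)) *\<^sub>R u'"
      by (simp only: scaleR_add_left[symmetric]) (rule arg_cong[where f="\<lambda>t. t *\<^sub>R u'"], simp add: algebra_simps)
    show ?thesis unfolding Fv Fv' i by (simp add: scaleR_diff_left scaleR_diff_right j)
  qed
  have b1: "norm ((u' \<bullet> x) *\<^sub>R u') \<le> norm x"
    using Cauchy_Schwarz_ineq2[of u' x] nu by simp
  have b2: "norm (((u' - u) \<bullet> x) *\<^sub>R u' + (u \<bullet> x) *\<^sub>R (u' - u)) \<le> 2 * norm (u' - u) * norm x"
  proof -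
    have "norm (((u' - u) \<bullet> x) *\<^sub>R u') \<le> norm (u' - u) * norm x"
      using Cauchy_Schwarz_ineq2[of "u' - u" x] nu by simp
    moreover have "norm ((u \<bullet> x) *\<^sub>R (u' - u)) \<le> norm (u' - u) * norm x"
      using Cauchy_Schwarz_ineq2[of u x] nu by (simp add: mult_right_mono mult.commute)
    ultimately show ?thesis using norm_triangle_ineq[of "((u' - u) \<bullet> x) *\<^sub>R u'" "(u \<bullet> x) *\<^sub>R (u' - u)"] by linarith
  qed
  have b3: "norm v * norm (u' - u) \<le> 2 * norm (v' - v)"
  proof -
    have "norm v *\<^sub>R (u' - u) = (v' - v) + ((norm v - norm v') / norm v') *\<^sub>R v'"
    proof -
      have e1: "norm v *\<^sub>R u = v" using v by (simp add: u_def)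
      have e2: "((norm v - norm v') / norm v') *\<^sub>R v' = (norm v / norm v') *\<^sub>R v' - v'"
        using v' by (simp add: diff_divide_distrib scaleR_diff_left)
      have e3: "norm v *\<^sub>R u' = (norm v / norm v') *\<^sub>R v'" by (simp add: u'_def)
      show ?thesis unfolding e2 scaleR_diff_right e1 e3 by simp
    qed
    then have "norm v * norm (u' - u) = norm ((v' - v) + ((norm v - norm v') / norm v') *\<^sub>R v')"
      by (metis norm_scaleR abs_norm_cancel)
    also have "\<dots> \<le> norm (v' - v) + \<bar>norm v - norm v'\<bar>"
      using v' by (intro order_trans[OF norm_triangle_ineq]) simp
    also have "\<bar>norm v - norm v'\<bar> \<le> norm (v' - v)"
      by (metis norm_triangle_ineq3 norm_minus_commute)
    finally show ?thesis by simp
  qed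
  have b4: "\<bar>norm v' - norm v\<bar> \<le> norm (v' - v)" by (rule norm_triangle_ineq3)
  have n1: "norm ((norm v' - norm v) *\<^sub>R ((u' \<bullet> x) *\<^sub>R u')) \<le> \<bar>norm v' - norm v\<bar> * norm x"
    using b1 by (simp only: norm_scaleR) (rule mult_left_mono, auto)
  have n2: "norm (norm v *\<^sub>R (((u' - u) \<bullet> x) *\<^sub>R u' + (u \<bullet> x) *\<^sub>R (u' - u))) \<le> norm v * (2 * norm (u' - u) * norm x)"
    using b2 by (simp only: norm_scaleR abs_norm_cancel) (rule mult_left_mono, auto)
  have n3: "\<bar>norm v' - norm v\<bar> * norm x \<le> norm (v' - v) * norm x"
    using b4 by (rule mult_right_mono) simp
  have n4: "norm v * (2 * norm (u' - u) * norm x) \<le> 4 * norm (v' - v) * norm x"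
  proof -
    have "norm v * (2 * norm (u' - u) * norm x) = 2 * (norm v * norm (u' - u)) * norm x" by (simp add: mult_ac)
    also have "\<dots> \<le> 2 * (2 * norm (v' - v)) * norm x"
      using b3 by (intro mult_right_mono) auto
    finally show ?thesis by simp
  qed
  show ?thesis unfolding dec
    using norm_triangle_ineq[of "(norm v' - norm v) *\<^sub>R ((u' \<bullet> x) *\<^sub>R u')" "norm v *\<^sub>R (((u' - u) \<bullet> x) *\<^sub>R u' + (u \<bullet> x) *\<^sub>R (u' - u))"]
      n1 n2 n3 n4 by linarith
qed


lemma angle_facts:
  fixes z w :: "real^'n"
  assumes z: "norm z = 1" and w: "norm w = 1"
  shows "0 \<le> vec_angle z w" "vec_angle z w \<le> pi"
    "cos (vec_angle z w / 2) = norm (z + w) / 2"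
    "sin (vec_angle z w / 2) = norm (z - w) / 2"
    "sin (vec_angle z w) = norm (z + w) * norm (z - w) / 2"
proof -
  define c where "c = z \<bullet> w"
  have cb: "\<bar>c\<bar> \<le> 1" using Cauchy_Schwarz_ineq2[of z w] z w by (simp add: c_def)
  then have cb': "-1 \<le> c" "c \<le> 1" by auto
  define th where "th = vec_angle z w"
  have th: "th = arccos c" by (simp add: th_def vec_angle_def z w c_def)
  show "0 \<le> vec_angle z w" "vec_angle z w \<le> pi"
    using arccos_bounded[OF cb'] th th_def by auto
  then have th0: "0 \<le> th / 2" "th / 2 \<le> pi / 2" using th_def by auto
  have zz: "z \<bullet> z = 1" using z by (simp add: dot_square_norm)
  have ww: "w \<bullet> w = 1" using w by (simp add: dot_square_norm)
  have na: "(norm (z + w))^2 = 2 + 2 * c"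
    unfolding power2_norm_eq_inner by (simp add: inner_add zz ww inner_commute c_def)
  have nb: "(norm (z - w))^2 = 2 - 2 * c"
    unfolding power2_norm_eq_inner by (simp add: inner_diff zz ww inner_commute c_def)
  have cth: "cos th = c" using th cb' by simp
  have "cos th = 2 * (cos (th/2))^2 - 1" using cos_double_cos[of "th/2"] by simp
  then have c2: "(cos (th/2))^2 = (norm (z + w) / 2)^2"
    using cth na by (simp add: power_divide)
  have cpos: "0 \<le> cos (th/2)" using th0 by (intro cos_ge_zero) auto
  show cz: "cos (vec_angle z w / 2) = norm (z + w) / 2"
    using power2_eq_imp_eq[OF c2 cpos] th_def by simp
  have "(sin (th/2))^2 = 1 - (cos (th/2))^2" by (simp add: sin_squared_eq)
  then have s2: "(sin (th/2))^2 = (norm (z - w) / 2)^2"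
    using c2 na nb by (simp add: power_divide field_simps)
  have spos: "0 \<le> sin (th/2)" using th0 by (intro sin_ge_zero) auto
  show sz: "sin (vec_angle z w / 2) = norm (z - w) / 2"
    using power2_eq_imp_eq[OF s2 spos] th_def by simp
  have "sin th = 2 * sin (th/2) * cos (th/2)" using sin_double[of "th/2"] by simp
  then show "sin (vec_angle z w) = norm (z + w) * norm (z - w) / 2"
    using cz sz th_def by simp
qed

lemma Phi_mv:
  fixes z w :: "real^'n"
  assumes z: "norm z = 1" and w: "norm w = 1"
  shows "Phi z w *v x = ((pi - 2 * vec_angle z w) / pi) *\<^sub>R x
     + (1 / pi) *\<^sub>R (norm (z - w) *\<^sub>R FF (z + w) x - norm (z + w) *\<^sub>R FF (z - w) x)"
proof -
  have s: "sin (vec_angle z w) = norm (z + w) * norm (z - w) / 2" by (rule angle_facts[OF z w])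
  have "(2 * sin (vec_angle z w) / pi) *\<^sub>R (swap_mat z w *v x)
      = (1 / pi) *\<^sub>R (norm (z - w) *\<^sub>R FF (z + w) x - norm (z + w) *\<^sub>R FF (z - w) x)"
  proof (cases "z + w = 0 \<or> z - w = 0")
    case True
    then show ?thesis using s by (auto simp: FF_def)
  next
    case False
    then have a: "z + w \<noteq> 0" and b: "z - w \<noteq> 0" by auto
    show ?thesis unfolding swap_mat_eq[OF z w a b] s FF_def using a b
      by (simp add: scaleR_diff_right power2_eq_square field_simps)
  qed
  then show ?thesis unfolding Phi_def
    by (simp add: matrix_vector_mult_add_rdistrib scaleR_matrix_vector_assoc[symmetric])
qed


lemma G_lip:
  fixes a b a' b' x :: "real^'n"
  assumes "norm a \<le> 2" "norm b \<le> 2" "norm a' \<le> 2" "norm b' \<le> 2"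
  shows "norm ((norm b' *\<^sub>R FF a' x - norm a' *\<^sub>R FF b' x) - (norm b *\<^sub>R FF a x - norm a *\<^sub>R FF b x))
     \<le> 12 * (norm (a' - a) + norm (b' - b)) * norm x"
proof -
  have part: "norm (norm q' *\<^sub>R FF p' x - norm q *\<^sub>R FF p x) \<le> 2 * norm (q' - q) * norm x + 10 * norm (p' - p) * norm x"
    if "norm p' \<le> 2" "norm q \<le> 2" for p q p' q' :: "real^'n"
  proof -
    have e: "norm q' *\<^sub>R FF p' x - norm q *\<^sub>R FF p x = (norm q' - norm q) *\<^sub>R FF p' x + norm q *\<^sub>R (FF p' x - FF p x)"
      by (simp add: scaleR_diff_left scaleR_diff_right)
    have n1: "norm ((norm q' - norm q) *\<^sub>R FF p' x) \<le> norm (q' - q) * (2 * norm x)"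
    proof -
      have "norm (FF p' x) \<le> 2 * norm x"
        using FF_bound[of p' x] that(1) mult_right_mono[of "norm p'" 2 "norm x"] by simp
      moreover have "\<bar>norm q' - norm q\<bar> \<le> norm (q' - q)" by (rule norm_triangle_ineq3)
      ultimately show ?thesis by (simp only: norm_scaleR) (rule mult_mono, auto)
    qed
    have n2: "norm (norm q *\<^sub>R (FF p' x - FF p x)) \<le> 2 * (5 * norm (p' - p) * norm x)"
      by (simp only: norm_scaleR abs_norm_cancel) (rule mult_mono, auto simp: that FF_lip)
    show ?thesis unfolding e
      using norm_triangle_ineq[of "(norm q' - norm q) *\<^sub>R FF p' x" "norm q *\<^sub>R (FF p' x - FF p x)"] n1 n2
      by (simp add: mult_ac)
  qed
  have A: "norm (norm b' *\<^sub>R FF a' x - norm b *\<^sub>R FF a x) \<le> 2 * norm (b' - b) * norm x + 10 * norm (a' - a) * norm x"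
    using part assms by blast
  have B: "norm (norm a' *\<^sub>R FF b' x - norm a *\<^sub>R FF b x) \<le> 2 * norm (a' - a) * norm x + 10 * norm (b' - b) * norm x"
    using part assms by blast
  have e: "(norm b' *\<^sub>R FF a' x - norm a' *\<^sub>R FF b' x) - (norm b *\<^sub>R FF a x - norm a *\<^sub>R FF b x)
    = (norm b' *\<^sub>R FF a' x - norm b *\<^sub>R FF a x) - (norm a' *\<^sub>R FF b' x - norm a *\<^sub>R FF b x)"
    by simp
  have "norm ((norm b' *\<^sub>R FF a' x - norm a' *\<^sub>R FF b' x) - (norm b *\<^sub>R FF a x - norm a *\<^sub>R FF b x))
    \<le> norm (norm b' *\<^sub>R FF a' x - norm b *\<^sub>R FF a x) + norm (norm a' *\<^sub>R FF b' x - norm a *\<^sub>R FF b x)"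
    unfolding e by (rule norm_triangle_ineq4)
  also have "\<dots> \<le> 12 * (norm (a' - a) + norm (b' - b)) * norm x"
    using A B by (simp add: algebra_simps)
  finally show ?thesis .
qed

theorem lemma27:
  fixes \<epsilon> :: real and z w z' w' :: "real^'n"
  assumes "0 < \<epsilon>" "\<epsilon> < 1"
    and "norm z = 1" "norm w = 1" "norm z' = 1" "norm w' = 1"
    and "norm (z' - z) \<le> \<epsilon>" "norm (w' - w) \<le> \<epsilon>"
  shows "spec_norm (Phi z' w' - Phi z w) \<le> 88 / pi * \<epsilon>"
proof -
  note z = assms(3) and w = assms(4) and z' = assms(5) and w' = assms(6)
  define a where "a = z + w"
  define b where "b = z - w"
  define a' where "a' = z' + w'"
  define b' where "b' = z' - w'"
  define th where "th = vec_angle z w"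
  define th' where "th' = vec_angle z' w'"
  have da: "norm (a' - a) \<le> 2 * \<epsilon>"
  proof -
    have "a' - a = (z' - z) + (w' - w)" by (simp add: a_def a'_def)
    then show ?thesis using norm_triangle_ineq[of "z' - z" "w' - w"] assms(7,8) by simp
  qed
  have db: "norm (b' - b) \<le> 2 * \<epsilon>"
  proof -
    have "b' - b = (z' - z) - (w' - w)" by (simp add: b_def b'_def)
    then show ?thesis using norm_triangle_ineq4[of "z' - z" "w' - w"] assms(7,8) by simp
  qed
  have n2: "norm a \<le> 2" "norm b \<le> 2" "norm a' \<le> 2" "norm b' \<le> 2"
    unfolding a_def b_def a'_def b'_def
    using norm_triangle_ineq[of z w] norm_triangle_ineq4[of z w]
      norm_triangle_ineq[of z' w'] norm_triangle_ineq4[of z' w'] z w z' w' by auto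
  have dth: "\<bar>th' - th\<bar> \<le> 8 * \<epsilon>"
  proof -
    have r: "0 \<le> th/2" "th/2 \<le> pi/2" "0 \<le> th'/2" "th'/2 \<le> pi/2"
      using angle_facts(1,2)[OF z w] angle_facts(1,2)[OF z' w'] th_def th'_def by auto
    have "\<bar>th'/2 - th/2\<bar> \<le> 2 * (\<bar>cos (th'/2) - cos (th/2)\<bar> + \<bar>sin (th'/2) - sin (th/2)\<bar>)"
      using angle_chord r by blast
    also have "\<dots> = 2 * (\<bar>norm a' / 2 - norm a / 2\<bar> + \<bar>norm b' / 2 - norm b / 2\<bar>)"
      by (simp only: th_def th'_def angle_facts(3,4)[OF z w] angle_facts(3,4)[OF z' w'] a_def b_def a'_def b'_def)
    also have "\<dots> = \<bar>norm a' - norm a\<bar> + \<bar>norm b' - norm b\<bar>" by (auto split: abs_split)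
    also have "\<dots> \<le> norm (a' - a) + norm (b' - b)"
      using norm_triangle_ineq3[of a' a] norm_triangle_ineq3[of b' b] by linarith
    finally show ?thesis using da db by simp
  qed
  have main: "norm ((Phi z' w' - Phi z w) *v x) \<le> 88 / pi * \<epsilon> * norm x" for x
  proof -
    define G where "G = norm b *\<^sub>R FF a x - norm a *\<^sub>R FF b x"
    define G' where "G' = norm b' *\<^sub>R FF a' x - norm a' *\<^sub>R FF b' x"
    have "(Phi z' w' - Phi z w) *v x = ((pi - 2 * th') / pi - (pi - 2 * th) / pi) *\<^sub>R x + (1 / pi) *\<^sub>R (G' - G)"
      unfolding matrix_vector_mult_diff_rdistrib Phi_mv[OF z w] Phi_mv[OF z' w']
      by (simp add: G_def G'_def a_def b_def a'_def b'_def th_def th'_def algebra_simps)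
    also have "((pi - 2 * th') / pi - (pi - 2 * th) / pi) = 2 * (th - th') / pi"
      by (simp add: field_simps)
    finally have e: "(Phi z' w' - Phi z w) *v x = (2 * (th - th') / pi) *\<^sub>R x + (1 / pi) *\<^sub>R (G' - G)" .
    have g: "norm (G' - G) \<le> 48 * \<epsilon> * norm x"
    proof -
      have "norm (G' - G) \<le> 12 * (norm (a' - a) + norm (b' - b)) * norm x"
        unfolding G_def G'_def by (rule G_lip[OF n2])
      also have "\<dots> \<le> 12 * (4 * \<epsilon>) * norm x"
        using da db by (intro mult_right_mono) auto
      finally show ?thesis by simp
    qed
    have t1: "norm ((2 * (th - th') / pi) *\<^sub>R x) \<le> 16 * \<epsilon> / pi * norm x"
    proof -
      have "norm ((2 * (th - th') / pi) *\<^sub>R x) = 2 * \<bar>th' - th\<bar> / pi * norm x"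
        by (simp add: abs_minus_commute) (auto split: abs_split)
      also have "\<dots> \<le> 2 * (8 * \<epsilon>) / pi * norm x"
        using dth by (intro mult_right_mono divide_right_mono) auto
      finally show ?thesis by simp
    qed
    have t2: "norm ((1 / pi) *\<^sub>R (G' - G)) \<le> 48 * \<epsilon> / pi * norm x"
      using g by (simp add: divide_right_mono)
    have "norm ((Phi z' w' - Phi z w) *v x) \<le> 16 * \<epsilon> / pi * norm x + 48 * \<epsilon> / pi * norm x"
      unfolding e using norm_triangle_ineq[of "(2 * (th - th') / pi) *\<^sub>R x" "(1 / pi) *\<^sub>R (G' - G)"] t1 t2
      by linarith
    also have "\<dots> \<le> 88 / pi * \<epsilon> * norm x"
      using assms(1) by (simp add: field_simps)
    finally show ?thesis .
  qed
  show ?thesis unfolding spec_norm_def by (rule onorm_le) (rule main)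
qed

end
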